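(* Let $m,n\ge 3$ be integers. If $m$ and $n$ are both even, then $\chi_{ei}(C_m\square C_n)=2$. If $m\ge 4$, $m\notin\{5,7\}$, $n$ is odd and $n\ge 9$, then $\chi_{ei}(C_m\square C_n)=3$.
   Context: All graphs are finite and simple. $C_k$ denotes the cycle on $k$ vertices. A path $P_4$ in $G$ is a sequence $uxyv$ of four distinct vertices with $ux,xy,yv\in E(G)$; $u,v$ are its end vertices. An $e$-injective $k$-coloring of $G$ is a function $f:V(G)\to\{1,\dots,k\}$ with $f(u)\ne f(v)$ whenever $u,v$ are the end vertices of some path $P_4$ in $G$; $\chi_{ei}(G)$ is the least such $k$. In the Cartesian product $G\square H$ two vertices are adjacent if they are adjacent in one coordinate and equal in the other. *)

theory Defs
  imports Main
begin

text \<open>A graph is given by a vertex set V and a symmetric irreflexive adjacency relation E.\<close>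

definition p4_ends :: "'a set \<Rightarrow> ('a \<Rightarrow> 'a \<Rightarrow> bool) \<Rightarrow> 'a \<Rightarrow> 'a \<Rightarrow> bool" where
  "p4_ends V E u v \<longleftrightarrow> (\<exists>x y. distinct [u, x, y, v] \<and> {u, x, y, v} \<subseteq> V
      \<and> E u x \<and> E x y \<and> E y v)"

definition ei_coloring :: "'a set \<Rightarrow> ('a \<Rightarrow> 'a \<Rightarrow> bool) \<Rightarrow> nat \<Rightarrow> ('a \<Rightarrow> nat) \<Rightarrow> bool" where
  "ei_coloring V E k f \<longleftrightarrow> (\<forall>v\<in>V. f v \<in> {1..k})
      \<and> (\<forall>u v. p4_ends V E u v \<longrightarrow> f u \<noteq> f v)"

definition chi_ei :: "'a set \<Rightarrow> ('a \<Rightarrow> 'a \<Rightarrow> bool) \<Rightarrow> nat" where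
  "chi_ei V E = (LEAST k. \<exists>f. ei_coloring V E k f)"

definition cycle_verts :: "nat \<Rightarrow> nat set" where
  "cycle_verts k = {0..<k}"

definition cycle_adj :: "nat \<Rightarrow> nat \<Rightarrow> nat \<Rightarrow> bool" where
  "cycle_adj k i j \<longleftrightarrow> i < k \<and> j < k \<and> (j = (i + 1) mod k \<or> i = (j + 1) mod k)"

definition cart_verts :: "'a set \<Rightarrow> 'b set \<Rightarrow> ('a \<times> 'b) set" where
  "cart_verts V1 V2 = V1 \<times> V2"

definition cart_adj :: "('a \<Rightarrow> 'a \<Rightarrow> bool) \<Rightarrow> ('b \<Rightarrow> 'b \<Rightarrow> bool) \<Rightarrow> 'a \<times> 'b \<Rightarrow> 'a \<times> 'b \<Rightarrow> bool" where
  "cart_adj E1 E2 p q \<longleftrightarrow> (E1 (fst p) (fst q) \<and> snd p = snd q) \<or> (fst p = fst q \<and> E2 (snd p) (snd q))"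

end

theory Submission
  imports Defs
begin



lemma cyc_sym: "cycle_adj N a b = cycle_adj N b a"
  unfolding cycle_adj_def by auto

lemma hom_succ:
  assumes "\<And>i. i < a \<Longrightarrow> cycle_adj b (h i) (h ((i+1) mod a))"
    and "cycle_adj a x y"
  shows "cycle_adj b (h x) (h y)"
proof -
  have "x < a" "y < a" "y = (x+1) mod a \<or> x = (y+1) mod a" using assms(2) unfolding cycle_adj_def by auto
  then show ?thesis using assms(1)[of x] assms(1)[of y] cyc_sym by metis
qed

lemma shift1: "((a+1) mod N + c) mod N = (((a::nat)+c) mod N + 1) mod N"
proof -
  have "((a+1) mod N + c) mod N = (a+1+c) mod N" by (rule mod_add_left_eq)
  also have "\<dots> = ((a+c) + 1) mod N" by (simp add: algebra_simps)
  also have "\<dots> = ((a+c) mod N + 1) mod N" by (rule mod_add_left_eq[symmetric])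
  finally show ?thesis .
qed

lemma cyc_shift:
  assumes "cycle_adj N a b"
  shows "cycle_adj N ((a + c) mod N) ((b + c) mod N)"
proof -
  have N: "N > 0" using assms unfolding cycle_adj_def by auto
  have "b = (a+1) mod N \<or> a = (b+1) mod N" using assms unfolding cycle_adj_def by auto
  then have "(b + c) mod N = ((a + c) mod N + 1) mod N \<or> (a + c) mod N = ((b + c) mod N + 1) mod N"
    using shift1 by metis
  then show ?thesis using N unfolding cycle_adj_def by auto
qed


lemma sp: "(a::nat) < N \<Longrightarrow> (a+1) mod N = (if a+1 = N then 0 else a+1)"
  by simp

lemma succ_inj: "(a::nat) < N \<Longrightarrow> c < N \<Longrightarrow> (a+1) mod N = (c+1) mod N \<Longrightarrow> a = c"
  using sp[of a N] sp[of c N] by (simp split: if_splits)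

lemma s3: "(((x+1) mod N + 1) mod N + 1) mod N = ((x::nat)+3) mod N"
  by (simp add: mod_Suc_eq numeral_3_eq_3)

lemma s2: "((x+1) mod N + 1) mod N = ((x::nat)+2) mod N"
  by (simp add: mod_Suc_eq)

lemma walk3:
  assumes "cycle_adj N a b" "cycle_adj N b c" "cycle_adj N c d"
  shows "d = (a+1) mod N \<or> d = (a+3) mod N \<or> a = (d+1) mod N \<or> a = (d+3) mod N"
proof -
  have lt: "a < N" "b < N" "c < N" "d < N" using assms unfolding cycle_adj_def by auto
  have e1: "b = (a+1) mod N \<or> a = (b+1) mod N" using assms(1) unfolding cycle_adj_def by auto
  have e2: "c = (b+1) mod N \<or> b = (c+1) mod N" using assms(2) unfolding cycle_adj_def by auto
  have e3: "d = (c+1) mod N \<or> c = (d+1) mod N" using assms(3) unfolding cycle_adj_def by auto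
  show ?thesis
  proof (cases "b = (a+1) mod N")
    case b1: True
    show ?thesis
    proof (cases "c = (b+1) mod N")
      case c1: True
      show ?thesis
      proof (cases "d = (c+1) mod N")
        case True then show ?thesis using b1 c1 s3[of a N] by simp
      next
        case False
        then have "c = (d+1) mod N" using e3 by blast
        then have "(d+1) mod N = ((a+1) mod N + 1) mod N" using b1 c1 by simp
        then have "d = (a+1) mod N" using succ_inj[of d N "(a+1) mod N"] lt by auto
        then show ?thesis by simp
      qed
    next
      case False
      then have "b = (c+1) mod N" using e2 by blast
      then have "(a+1) mod N = (c+1) mod N" using b1 by metis
      then have "c = a" using succ_inj[of a N c] lt by blast
      then show ?thesis using e3 by blast
    qed
  next
    case False
    then have a1: "a = (b+1) mod N" using e1 by blast
    show ?thesis
    proof (cases "c = (b+1) mod N")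
      case True
      then have "c = a" using a1 by simp
      then show ?thesis using e3 by blast
    next
      case False
      then have b2: "b = (c+1) mod N" using e2 by blast
      show ?thesis
      proof (cases "d = (c+1) mod N")
        case True then have "d = b" using b2 by simp
        then show ?thesis using a1 by simp
      next
        case False
        then have "c = (d+1) mod N" using e3 by blast
        then show ?thesis using a1 b2 s3[of d N] by simp
      qed
    qed
  qed
qed



definition SS :: "nat \<Rightarrow> nat \<Rightarrow> nat" where
  "SS N x = (if x < N - 6 then x mod 2 else [1,2,1,2,0,2] ! (x - (N-6))) + 1"

lemma SSv: "r < 9 \<Longrightarrow> SS (2*k+9) (2*k+r) = (if r < 3 then r mod 2 else [1,2,1,2,0,2] ! (r-3)) + 1"
proof -
  have e: "2*k+9-6 = 2*k+3" by simp
  show ?thesis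
  proof (cases "r < 3")
    case True then show ?thesis unfolding SS_def e by simp
  next
    case False
    then have "2*k+r - (2*k+3) = r - 3" by simp
    then show ?thesis unfolding SS_def e using False by simp
  qed
qed

lemma SSs: "x < 3 \<Longrightarrow> SS (2*k+9) x = x mod 2 + 1"
proof -
  have e: "2*k+9-6 = 2*k+3" by simp
  assume "x < 3" then show ?thesis unfolding SS_def e by simp
qed

lemma modl: "(t::nat) + s < 18 \<Longrightarrow> (2*k+t+s) mod (2*k+9) = (if t+s < 9 then 2*k+(t+s) else t+s-9)"
proof (cases "t + s < 9")
  case True then show ?thesis by simp
next
  case False
  assume "t + s < 18"
  then have e: "(2*k+t+s) = (t+s-9) + (2*k+9)" and l: "t+s-9 < 2*k+9" using False by auto
  have "(2*k+t+s) mod (2*k+9) = (t+s-9) mod (2*k+9)" unfolding e by (rule mod_add_self2)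
  also have "\<dots> = t+s-9" using l by simp
  finally show ?thesis using False by simp
qed

lemma SS_loc:
  assumes "N = 2*k+9" "a < N"
  shows "SS N a \<noteq> SS N ((a+1) mod N) \<and> SS N a \<noteq> SS N ((a+3) mod N)"
proof (cases "a < 2*k")
  case True
  then have "SS N a = a mod 2 + 1" "SS N ((a+1) mod N) = (a+1) mod 2 + 1" "SS N ((a+3) mod N) = (a+3) mod 2 + 1"
    using assms unfolding SS_def by auto
  then show ?thesis by presburger
next
  case False
  then obtain t where t: "a = 2*k+t" "t < 9" using assms by (metis add_less_cancel_left le_Suc_ex not_less)
  have m1: "(a+1) mod N = (if t+1 < 9 then 2*k+(t+1) else t+1-9)" using modl[of t 1 k] t assms by (simp add: add.assoc)
  have m3: "(a+3) mod N = (if t+3 < 9 then 2*k+(t+3) else t+3-9)" using modl[of t 3 k] t assms by (simp add: add.assoc)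
  define val where "val r = (if r < 3 then r mod 2 else [1,2,1,2,0,2] ! (r-3)) + (1::nat)" for r
  have v0: "SS N a = val t" using SSv[of t k] t assms unfolding val_def by simp
  have v1: "SS N ((a+1) mod N) = (if t+1 < 9 then val (t+1) else (t+1-9) mod 2 + 1)"
    unfolding m1 using SSv[of "t+1" k] SSs[of "t+1-9" k] t assms unfolding val_def by auto
  have v3: "SS N ((a+3) mod N) = (if t+3 < 9 then val (t+3) else (t+3-9) mod 2 + 1)"
    unfolding m3 using SSv[of "t+3" k] SSs[of "t+3-9" k] t assms unfolding val_def by auto
  have "t=0 \<or> t=1 \<or> t=2 \<or> t=3 \<or> t=4 \<or> t=5 \<or> t=6 \<or> t=7 \<or> t=8" using t by auto
  then show ?thesis unfolding v0 v1 v3 val_def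
    by (elim disjE) simp_all
qed

lemma SS_range: "x < N \<Longrightarrow> N \<ge> 6 \<Longrightarrow> SS N x \<in> {1..3}"
proof -
  assume a: "x < N" "N \<ge> 6"
  show ?thesis
  proof (cases "x < N - 6")
    case False
    then have "x - (N-6) < 6" using a by auto
    then have r: "x - (N-6) = 0 \<or> x - (N-6) = 1 \<or> x - (N-6) = 2 \<or> x - (N-6) = 3 \<or> x - (N-6) = 4 \<or> x - (N-6) = 5" by linarith
    have "SS N x = [1,2,1,2,0,2] ! (x - (N-6)) + 1" unfolding SS_def using False by simp
    then show ?thesis using r by (elim disjE) simp_all
  qed (auto simp: SS_def)
qed



lemma prod_hom:
  assumes hp: "\<And>x y. cycle_adj m x y \<Longrightarrow> cycle_adj N (p x) (p y)"
    and hq: "\<And>x y. cycle_adj n x y \<Longrightarrow> cycle_adj N (q x) (q y)"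
    and e: "cart_adj (cycle_adj m) (cycle_adj n) u v"
  shows "cycle_adj N ((p (fst u) + q (snd u)) mod N) ((p (fst v) + q (snd v)) mod N)"
  using e unfolding cart_adj_def
proof
  assume "cycle_adj m (fst u) (fst v) \<and> snd u = snd v"
  then show ?thesis using cyc_shift[OF hp, of "fst u" "fst v" "q (snd u)"] by auto
next
  assume "fst u = fst v \<and> cycle_adj n (snd u) (snd v)"
  then show ?thesis using cyc_shift[OF hq, of "snd u" "snd v" "p (fst u)"] by (auto simp: add.commute)
qed

lemma color_from_hom:
  assumes "\<And>u v. u\<in>V \<Longrightarrow> v\<in>V \<Longrightarrow> E u v \<Longrightarrow> cycle_adj N (h u) (h v)"
    and "\<And>v. v\<in>V \<Longrightarrow> S (h v) \<in> {1..k}"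
    and "\<And>a b c d. cycle_adj N a b \<Longrightarrow> cycle_adj N b c \<Longrightarrow> cycle_adj N c d \<Longrightarrow> S a \<noteq> S d"
  shows "ei_coloring V E k (\<lambda>v. S (h v))"
  unfolding ei_coloring_def p4_ends_def
proof (intro conjI allI impI ballI)
  fix v assume "v \<in> V" then show "S (h v) \<in> {1..k}" using assms(2) by auto
next
  fix u v assume "\<exists>x y. distinct [u, x, y, v] \<and> {u, x, y, v} \<subseteq> V \<and> E u x \<and> E x y \<and> E y v"
  then obtain x y where "{u, x, y, v} \<subseteq> V" "E u x" "E x y" "E y v" by blast
  then show "S (h u) \<noteq> S (h v)" using assms(1)[of u x] assms(1)[of x y] assms(1)[of y v] assms(3) by auto
qed

lemma Sgood:
  assumes "\<And>a. a < N \<Longrightarrow> S a \<noteq> S ((a+1) mod N) \<and> S a \<noteq> S ((a+3) mod N)"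
    and "cycle_adj N a b" "cycle_adj N b c" "cycle_adj N c d"
  shows "S a \<noteq> S d"
proof -
  have "a < N" "d < N" using assms(2,4) unfolding cycle_adj_def by auto
  then show ?thesis using walk3[OF assms(2-4)] assms(1)[of a] assms(1)[of d] by metis
qed

lemma par_hom:
  assumes "even a" "b \<ge> 2" "cycle_adj a x y"
  shows "cycle_adj b (x mod 2) (y mod 2)"
proof -
  have s: "\<And>i. i < a \<Longrightarrow> cycle_adj b (i mod 2) (((i+1) mod a) mod 2)"
  proof -
    fix i assume "i < a"
    have "((i+1) mod a) mod 2 = (i+1) mod 2" using assms(1) by (simp add: mod_mod_cancel)
    then show "cycle_adj b (i mod 2) (((i+1) mod a) mod 2)"
      using assms(2) unfolding cycle_adj_def by (auto simp: mod_Suc)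
  qed
  show ?thesis using hom_succ[of a b "\<lambda>i. i mod 2", OF s assms(3)] by simp
qed

lemma id_hom: "cycle_adj a x y \<Longrightarrow> cycle_adj a x y" by simp

definition wr :: "nat \<Rightarrow> nat \<Rightarrow> nat" where
  "wr b i = (if i < b then i else if even (i - b) then b - 2 else b - 1)"

lemma wr_hom:
  assumes "a \<ge> b" "odd a" "odd b" "b \<ge> 3" "cycle_adj a x y"
  shows "cycle_adj b (wr b x) (wr b y)"
proof -
  have s: "\<And>i. i < a \<Longrightarrow> cycle_adj b (wr b i) (wr b ((i+1) mod a))"
  proof -
    fix i assume i: "i < a"
    show "cycle_adj b (wr b i) (wr b ((i+1) mod a))"
    proof (cases "i + 1 = a")
      case True
      then have "wr b i = b - 1" using assms unfolding wr_def by (auto; presburger)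
      moreover have "wr b ((i+1) mod a) = 0" using True assms unfolding wr_def by simp
      ultimately show ?thesis using assms unfolding cycle_adj_def by auto
    next
      case False
      then have im: "(i+1) mod a = i + 1" using i by simp
      show ?thesis
      proof (cases "i + 1 < b")
        case True then show ?thesis using im unfolding wr_def cycle_adj_def by auto
      next
        case False
        show ?thesis
        proof (cases "i < b")
          case True
          then have "i = b - 1" using False by simp
          then have "wr b i = b - 1" "wr b (i+1) = b - 2" using assms unfolding wr_def by auto
          then show ?thesis using im assms unfolding cycle_adj_def by auto
        next
          case ib: False
          have "i + 1 - b = Suc (i - b)" using ib by simp
          then have "wr b i = (if even (i - b) then b - 2 else b - 1)"
            "wr b (i+1) = (if even (i - b) then b - 1 else b - 2)" using ib unfolding wr_def by auto
          then show ?thesis using im assms unfolding cycle_adj_def by auto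
        qed
      qed
    qed
  qed
  show ?thesis using hom_succ[of a b "wr b", OF s assms(5)] by simp
qed



lemma square_p4:
  assumes "m \<ge> 2" "n \<ge> 2" "j < n"
  shows "p4_ends (cart_verts (cycle_verts m) (cycle_verts n)) (cart_adj (cycle_adj m) (cycle_adj n))
           (0, j) (0, (j+1) mod n)"
proof -
  have jn: "j \<noteq> (j+1) mod n" using assms by (cases "j + 1 = n") auto
  have "distinct [(0,j), (1,j), (1, (j+1) mod n), (0::nat, (j+1) mod n)]" using jn by auto
  moreover have "{(0,j), (1,j), (1, (j+1) mod n), (0::nat, (j+1) mod n)} \<subseteq> cart_verts (cycle_verts m) (cycle_verts n)"
    using assms unfolding cart_verts_def cycle_verts_def by auto
  moreover have "cart_adj (cycle_adj m) (cycle_adj n) (0,j) (1,j)"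
    using assms unfolding cart_adj_def cycle_adj_def by auto
  moreover have "cart_adj (cycle_adj m) (cycle_adj n) (1,j) (1,(j+1) mod n)"
    using assms unfolding cart_adj_def cycle_adj_def by auto
  moreover have "cart_adj (cycle_adj m) (cycle_adj n) (1,(j+1) mod n) (0,(j+1) mod n)"
    using assms unfolding cart_adj_def cycle_adj_def by auto
  ultimately show ?thesis unfolding p4_ends_def by blast
qed

lemma no_small:
  assumes "m \<ge> 2" "n \<ge> 2" "k < 2"
  shows "\<not> ei_coloring (cart_verts (cycle_verts m) (cycle_verts n)) (cart_adj (cycle_adj m) (cycle_adj n)) k f"
proof
  assume c: "ei_coloring (cart_verts (cycle_verts m) (cycle_verts n)) (cart_adj (cycle_adj m) (cycle_adj n)) k f"
  have "(0::nat,0::nat) \<in> cart_verts (cycle_verts m) (cycle_verts n)" "(0::nat,1::nat) \<in> cart_verts (cycle_verts m) (cycle_verts n)"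
    using assms unfolding cart_verts_def cycle_verts_def by auto
  then have "f (0,0) \<in> {1..k}" "f (0,1) \<in> {1..k}" using c unfolding ei_coloring_def by auto
  moreover have "f (0,0) \<noteq> f (0, (0+1) mod n)" using c square_p4[of m n 0] assms unfolding ei_coloring_def by auto
  ultimately show False using assms by auto
qed

lemma no_two:
  assumes "m \<ge> 2" "n \<ge> 3" "odd n" "k \<le> 2"
  shows "\<not> ei_coloring (cart_verts (cycle_verts m) (cycle_verts n)) (cart_adj (cycle_adj m) (cycle_adj n)) k f"
proof
  assume c: "ei_coloring (cart_verts (cycle_verts m) (cycle_verts n)) (cart_adj (cycle_adj m) (cycle_adj n)) k f"
  have r: "f (0,j) \<in> {1,2}" if "j < n" for j
  proof -
    have "(0,j) \<in> cart_verts (cycle_verts m) (cycle_verts n)" using that assms unfolding cart_verts_def cycle_verts_def by auto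
    then have "f (0,j) \<in> {1..k}" using c unfolding ei_coloring_def by auto
    then show ?thesis using assms by auto
  qed
  have d: "f (0,j) \<noteq> f (0, (j+1) mod n)" if "j < n" for j
    using c square_p4[of m n j] assms that unfolding ei_coloring_def by auto
  have ind: "j < n \<Longrightarrow> (f (0,j) = f (0,0)) = even j" for j
  proof (induction j)
    case 0 then show ?case by simp
  next
    case (Suc j)
    then have "f (0, Suc j) \<noteq> f (0, j)" using d[of j] by simp
    moreover have "f (0, Suc j) \<in> {1,2}" "f (0,j) \<in> {1,2}" "f (0,0) \<in> {1,2}" using r Suc.prems by auto
    ultimately show ?case using Suc by auto
  qed
  have "f (0, n-1) = f (0,0)" using ind[of "n-1"] assms by auto
  moreover have "f (0, n-1) \<noteq> f (0, ((n-1)+1) mod n)" using d[of "n-1"] assms by auto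
  ultimately show False using assms by simp
qed



lemma col_gen:
  assumes hp: "\<And>x y. cycle_adj m x y \<Longrightarrow> cycle_adj N (p x) (p y)"
    and hq: "\<And>x y. cycle_adj n x y \<Longrightarrow> cycle_adj N (q x) (q y)"
    and N: "N > 0"
    and rng: "\<And>x. x < N \<Longrightarrow> S x \<in> {1..k}"
    and loc: "\<And>a. a < N \<Longrightarrow> S a \<noteq> S ((a+1) mod N) \<and> S a \<noteq> S ((a+3) mod N)"
  shows "\<exists>f. ei_coloring (cart_verts (cycle_verts m) (cycle_verts n)) (cart_adj (cycle_adj m) (cycle_adj n)) k f"
proof -
  let ?h = "\<lambda>u. (p (fst u) + q (snd u)) mod N"
  have "ei_coloring (cart_verts (cycle_verts m) (cycle_verts n)) (cart_adj (cycle_adj m) (cycle_adj n)) k (\<lambda>v. S (?h v))"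
  proof (rule color_from_hom[where h="?h" and S=S and N=N])
    fix u v assume "u \<in> cart_verts (cycle_verts m) (cycle_verts n)" "v \<in> cart_verts (cycle_verts m) (cycle_verts n)"
      "cart_adj (cycle_adj m) (cycle_adj n) u v"
    then show "cycle_adj N (?h u) (?h v)" using prod_hom[of m N p n q, OF hp hq] by blast
  next
    fix v show "S (?h v) \<in> {1..k}" using rng N by simp
  next
    fix a b c d assume "cycle_adj N a b" "cycle_adj N b c" "cycle_adj N c d"
    then show "S a \<noteq> S d" using Sgood[OF loc] by blast
  qed
  then show ?thesis by blast
qed

theorem theorem4p10:
  fixes m n :: nat
  assumes "m \<ge> 3" and "n \<ge> 3"
  shows "(even m \<and> even n \<longrightarrow>
           chi_ei (cart_verts (cycle_verts m) (cycle_verts n)) (cart_adj (cycle_adj m) (cycle_adj n)) = 2)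
       \<and> (m \<ge> 4 \<and> m \<notin> {5, 7} \<and> odd n \<and> n \<ge> 9 \<longrightarrow>
           chi_ei (cart_verts (cycle_verts m) (cycle_verts n)) (cart_adj (cycle_adj m) (cycle_adj n)) = 3)"
proof (intro conjI impI)
  assume ev: "even m \<and> even n"
  have ex: "\<exists>f. ei_coloring (cart_verts (cycle_verts m) (cycle_verts n)) (cart_adj (cycle_adj m) (cycle_adj n)) 2 f"
  proof (rule col_gen[where N=2 and p="\<lambda>x. x mod 2" and q="\<lambda>x. x mod 2" and S="\<lambda>x. x + 1"])
    fix x y assume "cycle_adj m x y" then show "cycle_adj 2 (x mod 2) (y mod 2)" using par_hom ev by auto
  next
    fix x y assume "cycle_adj n x y" then show "cycle_adj 2 (x mod 2) (y mod 2)" using par_hom ev by auto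
  next
    fix a :: nat assume "a < 2" then show "a + 1 \<noteq> (a + 1) mod 2 + 1 \<and> a + 1 \<noteq> (a + 3) mod 2 + 1"
      by (cases a) auto
  qed auto
  show "chi_ei (cart_verts (cycle_verts m) (cycle_verts n)) (cart_adj (cycle_adj m) (cycle_adj n)) = 2"
    unfolding chi_ei_def
  proof (rule Least_equality)
    show "\<exists>f. ei_coloring (cart_verts (cycle_verts m) (cycle_verts n)) (cart_adj (cycle_adj m) (cycle_adj n)) 2 f" by (rule ex)
  next
    fix y assume "\<exists>f. ei_coloring (cart_verts (cycle_verts m) (cycle_verts n)) (cart_adj (cycle_adj m) (cycle_adj n)) y f"
    then obtain f where "ei_coloring (cart_verts (cycle_verts m) (cycle_verts n)) (cart_adj (cycle_adj m) (cycle_adj n)) y f" by blast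
    then have "\<not> y < 2" using no_small[of m n y f] assms by linarith
    then show "2 \<le> y" by simp
  qed
next
  assume h: "m \<ge> 4 \<and> m \<notin> {5, 7} \<and> odd n \<and> n \<ge> 9"
  have ex: "\<exists>f. ei_coloring (cart_verts (cycle_verts m) (cycle_verts n)) (cart_adj (cycle_adj m) (cycle_adj n)) 3 f"
  proof -
    define kn where "kn = (n - 9) div 2"
    have "odd n" "n \<ge> 9" using h by auto
    then have kn: "n = 2*kn + 9" unfolding kn_def by presburger
    have Sn1: "\<And>x. x < n \<Longrightarrow> SS n x \<in> {1..3}" using SS_range h by auto
    have Sn2: "\<And>a. a < n \<Longrightarrow> SS n a \<noteq> SS n ((a+1) mod n) \<and> SS n a \<noteq> SS n ((a+3) mod n)"
      using SS_loc kn by blast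
    show ?thesis
    proof (cases "even m")
      case True
      show ?thesis
        by (rule col_gen[where N=n and p="\<lambda>x. x mod 2" and q="\<lambda>x. x" and S="SS n", OF _ _ _ Sn1 Sn2])
           (use par_hom True assms in auto)
    next
      case odd: False
      show ?thesis
      proof (cases "m \<ge> n")
        case True
        show ?thesis
          by (rule col_gen[where N=n and p="wr n" and q="\<lambda>x. x" and S="SS n", OF _ _ _ Sn1 Sn2])
             (use wr_hom True odd h in auto)
      next
        case False
        have "m \<noteq> 5" "m \<noteq> 7" "m \<ge> 4" using h by auto
        then have "m \<ge> 9" using odd by presburger
        define km where "km = (m - 9) div 2"
        have km: "m = 2*km + 9" using odd \<open>m \<ge> 9\<close> unfolding km_def by presburger
        have Sm1: "\<And>x. x < m \<Longrightarrow> SS m x \<in> {1..3}" using SS_range km by auto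
        have Sm2: "\<And>a. a < m \<Longrightarrow> SS m a \<noteq> SS m ((a+1) mod m) \<and> SS m a \<noteq> SS m ((a+3) mod m)"
          using SS_loc km by blast
        have wm: "\<And>x y. cycle_adj n x y \<Longrightarrow> cycle_adj m (wr m x) (wr m y)"
          using wr_hom[where a=n and b=m] False odd h assms by auto
        show ?thesis
          by (rule col_gen[where N=m and p="\<lambda>x. x" and q="wr m" and S="SS m", OF _ wm _ Sm1 Sm2])
             (use assms in auto)
      qed
    qed
  qed
  show "chi_ei (cart_verts (cycle_verts m) (cycle_verts n)) (cart_adj (cycle_adj m) (cycle_adj n)) = 3"
    unfolding chi_ei_def
  proof (rule Least_equality)
    show "\<exists>f. ei_coloring (cart_verts (cycle_verts m) (cycle_verts n)) (cart_adj (cycle_adj m) (cycle_adj n)) 3 f" by (rule ex)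
  next
    fix y assume "\<exists>f. ei_coloring (cart_verts (cycle_verts m) (cycle_verts n)) (cart_adj (cycle_adj m) (cycle_adj n)) y f"
    then obtain f where "ei_coloring (cart_verts (cycle_verts m) (cycle_verts n)) (cart_adj (cycle_adj m) (cycle_adj n)) y f" by blast
    then have "\<not> y \<le> 2" using no_two[of m n y f] assms h by linarith
    then show "3 \<le> y" by simp
  qed
qed

end
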